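(* Let $n,k,t$ be positive integers with $k<n$ and $q$ a prime power. Let $\Omega$ be an $(nt-kt-2)$-dimensional subspace of $\mathrm{PG}(nt-1,q)$, let $\Gamma$ be a plane skew from $\Omega$, and let $\bar{B}$ be a minimal blocking set (with respect to lines) of $\Gamma$ such that every point of $\bar{B}$ lies on at least $t$ tangent lines to $\bar{B}$ in $\Gamma$. Let $\Pi=\langle\Omega,\Gamma\rangle$ and let $K$ be the cone in $\Pi$ with vertex $\Omega$ and base $\bar{B}$. Then for every point $P$ of $K$ there exist a subspace $\mu$ of $\Pi$ of codimension $2$ in $\Pi$ and at least $t$ hyperplanes of $\Pi$ through $P$, each of which meets $K$ only in points of $\mu$.
   Context: The cone with vertex a subspace $\Omega$ and base a point set $\bar{B}$ contained in a subspace skew from $\Omega$ is $\bigcup_{P\in\bar B}\langle P,\Omega\rangle$. A blocking set of a plane is a point set meeting every line; it is minimal if no proper subset is a blocking set. A tangent line to $\bar B$ is a line meeting $\bar B$ in exactly one point. *)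

theory Defs
  imports "HOL-Analysis.Analysis" "HOL-Computational_Algebra.Primes"
begin

text \<open>Projective geometry PG(N-1,q) modelled as the lattice of vector subspaces of
  'a^'n, where 'a is a finite field with q elements and CARD('n) = N.
  A projective subspace of projective dimension d is a vector subspace of
  (vector) dimension d+1; points are 1-dimensional subspaces.\<close>

type_synonym ('a,'n) psubspace = "('a^'n) set"

definition psub :: "('a::field,'n::finite) psubspace \<Rightarrow> bool" where
  "psub S \<longleftrightarrow> vec.subspace S"

definition pdim :: "('a::field,'n::finite) psubspace \<Rightarrow> int" where
  "pdim S = int (vec.dim S) - 1"

definition ppoint :: "('a::field,'n::finite) psubspace \<Rightarrow> bool" where
  "ppoint P \<longleftrightarrow> psub P \<and> pdim P = 0"

definition pline :: "('a::field,'n::finite) psubspace \<Rightarrow> bool" where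
  "pline L \<longleftrightarrow> psub L \<and> pdim L = 1"

definition pplane :: "('a::field,'n::finite) psubspace \<Rightarrow> bool" where
  "pplane L \<longleftrightarrow> psub L \<and> pdim L = 2"

definition pjoin :: "('a::field,'n::finite) psubspace \<Rightarrow> ('a,'n) psubspace \<Rightarrow> ('a,'n) psubspace" where
  "pjoin A B = vec.span (A \<union> B)"

definition skew :: "('a::field,'n::finite) psubspace \<Rightarrow> ('a,'n) psubspace \<Rightarrow> bool" where
  "skew A B \<longleftrightarrow> A \<inter> B = {0}"

definition blocking_set :: "('a::field,'n::finite) psubspace \<Rightarrow> ('a,'n) psubspace set \<Rightarrow> bool" where
  "blocking_set \<Gamma> B \<longleftrightarrow> (\<forall>P\<in>B. ppoint P \<and> P \<subseteq> \<Gamma>) \<and>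
     (\<forall>L. pline L \<and> L \<subseteq> \<Gamma> \<longrightarrow> (\<exists>P\<in>B. P \<subseteq> L))"

definition minimal_blocking_set :: "('a::field,'n::finite) psubspace \<Rightarrow> ('a,'n) psubspace set \<Rightarrow> bool" where
  "minimal_blocking_set \<Gamma> B \<longleftrightarrow> blocking_set \<Gamma> B \<and> (\<forall>B'. B' \<subset> B \<longrightarrow> \<not> blocking_set \<Gamma> B')"

definition tangent_lines_at :: "('a::field,'n::finite) psubspace \<Rightarrow> ('a,'n) psubspace set \<Rightarrow> ('a,'n) psubspace \<Rightarrow> ('a,'n) psubspace set" where
  "tangent_lines_at \<Gamma> B P = {L. pline L \<and> L \<subseteq> \<Gamma> \<and> {Q\<in>B. Q \<subseteq> L} = {P}}"

definition cone :: "('a::field,'n::finite) psubspace \<Rightarrow> ('a,'n) psubspace set \<Rightarrow> ('a,'n) psubspace set" where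
  "cone \<Omega> B = {Q. ppoint Q \<and> (\<exists>P\<in>B. Q \<subseteq> pjoin P \<Omega>)}"

end

theory Submission
  imports Defs
begin

lemma span_Un_sub:
  assumes "vec.subspace A" "vec.subspace B"
  shows "vec.span (A \<union> B) = {x + y |x y. x \<in> A \<and> y \<in> B}"
  proof -
  have e: "vec.span A = A" "vec.span B = B" using assms vec.span_eq_iff by blast+
  show ?thesis using vec.span_Un[of A B] unfolding e .
qed

lemma dim_join:
  fixes A B :: "('a::field ^ 'n::finite) set"
  assumes "vec.subspace A" "vec.subspace B" "A \<inter> B \<subseteq> {0}"
  shows "vec.dim (vec.span (A \<union> B)) = vec.dim A + vec.dim B"
proof -
  have "A \<inter> B = {0}" using assms vec.subspace_0 by blast
  then show ?thesis using vec.dim_sums_Int[OF assms(1,2)] span_Un_sub[OF assms(1,2)] by simp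
qed

lemma meet:
  fixes A C W G :: "('a::field ^ 'n::finite) set"
  assumes "vec.subspace A" "vec.subspace C" "vec.subspace W" "vec.subspace G"
    "A \<subseteq> G" "C \<subseteq> G" "W \<inter> G = {0}"
    "x \<in> vec.span (A \<union> W)" "x \<in> vec.span (C \<union> W)"
  shows "\<exists>a w. x = a + w \<and> a \<in> A \<and> a \<in> C \<and> w \<in> W"
proof -
  have x1: "x \<in> {x + y |x y. x \<in> A \<and> y \<in> W}" using assms(8) span_Un_sub[OF assms(1,3)] by simp
  then obtain a w where aw: "x = a + w" "a \<in> A" "w \<in> W" by blast
  have x2: "x \<in> {x + y |x y. x \<in> C \<and> y \<in> W}" using assms(9) span_Un_sub[OF assms(2,3)] by simp
  then obtain c w' where cw: "x = c + w'" "c \<in> C" "w' \<in> W" by blast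
  have "a \<in> G" "c \<in> G" using assms(5,6) aw cw by auto
  then have "a - c \<in> G" using vec.subspace_diff[OF assms(4)] by blast
  moreover have "a - c = w' - w" using aw cw by (simp add: algebra_simps)
  moreover have "w' - w \<in> W" using vec.subspace_diff[OF assms(3)] aw cw by blast
  ultimately have "a - c \<in> W \<inter> G" by simp
  then have "a - c = 0" using assms(7) by simp
  then have "a = c" by simp
  then show ?thesis using aw cw by blast
qed

lemma point_sub:
  fixes R L :: "('a::field ^ 'n::finite) set"
  assumes "vec.subspace R" "vec.dim R = 1" "vec.subspace L" "r \<in> R" "r \<in> L" "r \<noteq> 0"
  shows "R \<subseteq> L"
proof -
  have "vec.span {r} \<subseteq> R" using assms vec.span_minimal by blast
  moreover have "vec.dim (vec.span {r}) = 1" using assms by simp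
  ultimately have "vec.span {r} = R"
    using vec.subspace_dim_equal[of "vec.span {r}" R] assms vec.subspace_span by simp
  moreover have "vec.span {r} \<subseteq> L" using assms vec.span_minimal by blast
  ultimately show ?thesis by simp
qed

theorem lemma4p3:
  fixes n k t q :: nat
    and \<Omega> \<Gamma> :: "('a::{field,finite}, 'm::finite) psubspace"
    and B :: "('a, 'm) psubspace set"
  assumes "0 < n" "0 < k" "0 < t" "k < n"
    and "CARD('a) = q" "\<exists>p r. prime p \<and> 0 < r \<and> q = p ^ r"
    and "CARD('m) = n * t"
    and "psub \<Omega>" "pdim \<Omega> = int (n * t) - int (k * t) - 2"
    and "pplane \<Gamma>" "skew \<Omega> \<Gamma>"
    and "minimal_blocking_set \<Gamma> B"
    and "\<forall>P\<in>B. card (tangent_lines_at \<Gamma> B P) \<ge> t"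
  shows "\<forall>P\<in>cone \<Omega> B. \<exists>\<mu> Hs.
           psub \<mu> \<and> \<mu> \<subseteq> pjoin \<Omega> \<Gamma> \<and> pdim \<mu> = pdim (pjoin \<Omega> \<Gamma>) - 2 \<and>
           card Hs \<ge> t \<and>
           (\<forall>H\<in>Hs. psub H \<and> H \<subseteq> pjoin \<Omega> \<Gamma> \<and> pdim H = pdim (pjoin \<Omega> \<Gamma>) - 1 \<and>
                    P \<subseteq> H \<and> (\<forall>Q\<in>cone \<Omega> B. Q \<subseteq> H \<longrightarrow> Q \<subseteq> \<mu>))"
proof
  fix P assume "P \<in> cone \<Omega> B"
  then obtain R where RB: "R \<in> B" and PR: "P \<subseteq> pjoin R \<Omega>" unfolding cone_def by auto
  have bs: "blocking_set \<Gamma> B" using assms(12) unfolding minimal_blocking_set_def by blast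
  have Bpts: "\<And>X. X \<in> B \<Longrightarrow> vec.subspace X \<and> vec.dim X = 1 \<and> X \<subseteq> \<Gamma>"
  proof -
    fix X assume "X \<in> B"
    then have "ppoint X \<and> X \<subseteq> \<Gamma>" using bs unfolding blocking_set_def by blast
    then show "vec.subspace X \<and> vec.dim X = 1 \<and> X \<subseteq> \<Gamma>"
      unfolding ppoint_def psub_def pdim_def by simp
  qed
  have sO: "vec.subspace \<Omega>" using assms(8) psub_def by auto
  have sG: "vec.subspace \<Gamma>" and dG: "vec.dim \<Gamma> = 3"
    using assms(10) unfolding pplane_def psub_def pdim_def by auto
  have OG: "\<Omega> \<inter> \<Gamma> = {0}" using assms(11) skew_def by auto
  have R: "vec.subspace R" "vec.dim R = 1" "R \<subseteq> \<Gamma>" using Bpts RB by auto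
  define D where "D = vec.dim \<Omega>"
  have dPi: "vec.dim (pjoin \<Omega> \<Gamma>) = D + 3"
    using dim_join[OF sO sG] OG dG D_def unfolding pjoin_def by simp
  have dmu: "vec.dim (pjoin R \<Omega>) = D + 1"
    using dim_join[OF R(1) sO] OG R D_def unfolding pjoin_def by auto
  define T where "T = tangent_lines_at \<Gamma> B R"
  have Tprop: "\<And>L. L \<in> T \<Longrightarrow> vec.subspace L \<and> vec.dim L = 2 \<and> L \<subseteq> \<Gamma> \<and> {Q\<in>B. Q \<subseteq> L} = {R}"
    unfolding T_def tangent_lines_at_def pline_def psub_def pdim_def by auto
  have dH: "\<And>L. L \<in> T \<Longrightarrow> vec.dim (pjoin L \<Omega>) = D + 2"
  proof -
    fix L assume "L \<in> T"
    then show "vec.dim (pjoin L \<Omega>) = D + 2"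
      using dim_join[of L \<Omega>] Tprop[of L] sO OG D_def unfolding pjoin_def by auto
  qed
  have inj: "inj_on (\<lambda>L. pjoin L \<Omega>) T"
  proof (rule inj_onI)
    fix L1 L2 assume L: "L1 \<in> T" "L2 \<in> T" "pjoin L1 \<Omega> = pjoin L2 \<Omega>"
    have key: "\<And>L. L \<in> T \<Longrightarrow> pjoin L \<Omega> \<inter> \<Gamma> = L"
    proof -
      fix L assume LT: "L \<in> T"
      show "pjoin L \<Omega> \<inter> \<Gamma> = L"
      proof
        show "L \<subseteq> pjoin L \<Omega> \<inter> \<Gamma>" using Tprop[OF LT] vec.span_superset[of "L \<union> \<Omega>"] unfolding pjoin_def by auto
      next
        show "pjoin L \<Omega> \<inter> \<Gamma> \<subseteq> L"
        proof
          fix x assume x: "x \<in> pjoin L \<Omega> \<inter> \<Gamma>"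
          have "x \<in> vec.span (\<Gamma> \<union> \<Omega>)" using x vec.span_superset[of "\<Gamma> \<union> \<Omega>"] by auto
          then obtain a w where aw: "x = a + w" "a \<in> L" "a \<in> \<Gamma>" "w \<in> \<Omega>"
          proof -
            have x1: "x \<in> vec.span (L \<union> \<Omega>)" using x unfolding pjoin_def by blast
            have "\<exists>a w. x = a + w \<and> a \<in> L \<and> a \<in> \<Gamma> \<and> w \<in> \<Omega>"
              by (rule meet[OF _ sG sO sG _ _ OG x1 \<open>x \<in> vec.span (\<Gamma> \<union> \<Omega>)\<close>]) (use Tprop[OF LT] in auto)
            then show ?thesis using that by blast
          qed
          have "w = x - a" using aw by simp
          then have "w \<in> \<Gamma>" using x aw vec.subspace_diff[OF sG, of x a] by simp
          then have "w = 0" using aw OG by auto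
          then show "x \<in> L" using aw by simp
        qed
      qed
    qed
    have "L1 = pjoin L1 \<Omega> \<inter> \<Gamma>" by (rule key[OF L(1), symmetric])
    also have "\<dots> = pjoin L2 \<Omega> \<inter> \<Gamma>" by (simp only: L(3))
    also have "\<dots> = L2" by (rule key[OF L(2)])
    finally show "L1 = L2" .
  qed
  define Hs where "Hs = (\<lambda>L. pjoin L \<Omega>) ` T"
  have cardHs: "card Hs \<ge> t" using card_image[OF inj] assms(13) RB T_def Hs_def by simp
  show "\<exists>\<mu> Hs.
           psub \<mu> \<and> \<mu> \<subseteq> pjoin \<Omega> \<Gamma> \<and> pdim \<mu> = pdim (pjoin \<Omega> \<Gamma>) - 2 \<and>
           card Hs \<ge> t \<and>
           (\<forall>H\<in>Hs. psub H \<and> H \<subseteq> pjoin \<Omega> \<Gamma> \<and> pdim H = pdim (pjoin \<Omega> \<Gamma>) - 1 \<and>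
                    P \<subseteq> H \<and> (\<forall>Q\<in>cone \<Omega> B. Q \<subseteq> H \<longrightarrow> Q \<subseteq> \<mu>))"
  proof (intro exI conjI)
    show "psub (pjoin R \<Omega>)" unfolding psub_def pjoin_def by (rule vec.subspace_span)
    show "pjoin R \<Omega> \<subseteq> pjoin \<Omega> \<Gamma>" unfolding pjoin_def using R(3)
      by (intro vec.span_mono) auto
    show "pdim (pjoin R \<Omega>) = pdim (pjoin \<Omega> \<Gamma>) - 2" unfolding pdim_def using dmu dPi by simp
    show "card Hs \<ge> t" by (rule cardHs)
    show "\<forall>H\<in>Hs. psub H \<and> H \<subseteq> pjoin \<Omega> \<Gamma> \<and> pdim H = pdim (pjoin \<Omega> \<Gamma>) - 1 \<and>
                    P \<subseteq> H \<and> (\<forall>Q\<in>cone \<Omega> B. Q \<subseteq> H \<longrightarrow> Q \<subseteq> pjoin R \<Omega>)"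
    proof
      fix H assume "H \<in> Hs"
      then obtain L where LT: "L \<in> T" and HL: "H = pjoin L \<Omega>" unfolding Hs_def by auto
      note Lp = Tprop[OF LT]
      have "R \<in> {Q\<in>B. Q \<subseteq> L}" using Lp by simp
      then have RL: "R \<subseteq> L" by simp
      show "psub H \<and> H \<subseteq> pjoin \<Omega> \<Gamma> \<and> pdim H = pdim (pjoin \<Omega> \<Gamma>) - 1 \<and>
                    P \<subseteq> H \<and> (\<forall>Q\<in>cone \<Omega> B. Q \<subseteq> H \<longrightarrow> Q \<subseteq> pjoin R \<Omega>)"
      proof (intro conjI ballI impI)
        show "psub H" unfolding HL psub_def pjoin_def by (rule vec.subspace_span)
        show "H \<subseteq> pjoin \<Omega> \<Gamma>" unfolding HL pjoin_def using Lp by (intro vec.span_mono) auto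
        show "pdim H = pdim (pjoin \<Omega> \<Gamma>) - 1" unfolding pdim_def HL using dH[OF LT] dPi by simp
        have "pjoin R \<Omega> \<subseteq> pjoin L \<Omega>" unfolding pjoin_def using RL by (intro vec.span_mono) auto
        then show "P \<subseteq> H" using PR unfolding HL by (rule order_trans[rotated])
      next
        fix Q assume "Q \<in> cone \<Omega> B" and QH: "Q \<subseteq> H"
        then obtain R' where R'B: "R' \<in> B" and QR': "Q \<subseteq> pjoin R' \<Omega>" unfolding cone_def by auto
        note R' = Bpts[OF R'B]
        show "Q \<subseteq> pjoin R \<Omega>"
        proof
          fix x assume xQ: "x \<in> Q"
          have x1: "x \<in> vec.span (R' \<union> \<Omega>)" using xQ QR' unfolding pjoin_def by blast
          have x2: "x \<in> vec.span (L \<union> \<Omega>)" using xQ QH unfolding HL pjoin_def by blast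
          have "\<exists>a w. x = a + w \<and> a \<in> R' \<and> a \<in> L \<and> w \<in> \<Omega>"
            by (rule meet[OF _ _ sO sG _ _ OG x1 x2]) (use R' Lp in auto)
          then obtain a w where aw: "x = a + w" "a \<in> R'" "a \<in> L" "w \<in> \<Omega>" by blast
          have "a \<in> R"
          proof (cases "a = 0")
            case True then show ?thesis using R(1) vec.subspace_0 by simp
          next
            case False
            then have "R' \<subseteq> L" using point_sub[of R' L a] R' Lp aw by auto
            then have "R' \<in> {Q\<in>B. Q \<subseteq> L}" using R'B by simp
            then have "R' = R" using Lp by simp
            then show ?thesis using aw by simp
          qed
          then show "x \<in> pjoin R \<Omega>" unfolding pjoin_def span_Un_sub[OF R(1) sO] using aw by blast
        qed
      qed
    qed
  qed
qed

end
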